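(* For all constants $\beta < \frac{1}{16}$, $L > 16\beta$ and $C_1 > 1$ there exists a constant $C_2 > 1$ such that the following holds. Let $\delta\in(0,1)$, suppose $n > C_2\log\frac{1}{\delta}$, and let $T = \sigma\sqrt{\frac{n}{2\log\frac{2}{\delta}}}$. Let $x_1,\dots,x_n$ be i.i.d. real samples from a distribution with mean $\mu$ and variance at most $\sigma^2$, and let $\mu_0\in\mathbb{R}$ be a given estimate with $|\mu_0 - \mu|\le C_1\sigma\sqrt{\frac{\log\frac{1}{\delta}}{n}}$. Consider the test that computes \[ B = \frac{1}{n}\sum_{i=1}^n (x_i - \mu_0)^2\mathbb{1}_{|x_i - \mu_0| \le 2\beta T} \] and returns ``INLIER-LIGHT'' if $B \le (1-2L)\sigma^2$ and ``OUTLIER-LIGHT'' otherwise. Then with probability at least $1-\delta$: if the test returns ``INLIER-LIGHT'', the distribution is $(\beta, L)$-inlier-light; and if it returns ``OUTLIER-LIGHT'', the distribution is $(4\beta, 4L)$-outlier-light.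
   Context: For a real-valued distribution $x$ with mean $\mu$ and variance at most $\sigma^2$, and with $T = \sigma\sqrt{\frac{n}{2\log\frac{2}{\delta}}}$: $x$ is $(\beta, L)$-inlier-light if $\mathbb{E}[(x-\mu)^2\mathbb{1}_{|x-\mu|\le\beta T}] < (1-L)\sigma^2$, and $x$ is $(\beta,L)$-outlier-light if $\mathbb{E}[(x-\mu)^2\mathbb{1}_{|x-\mu|\ge\beta T}] < L\sigma^2$. *)

theory Defs
  imports "HOL-Probability.Probability"
begin

definition T_param :: "real \<Rightarrow> nat \<Rightarrow> real \<Rightarrow> real" where
  "T_param \<sigma> n \<delta> = \<sigma> * sqrt (real n / (2 * ln (2 / \<delta>)))"

definition inlier_light :: "real measure \<Rightarrow> real \<Rightarrow> real \<Rightarrow> real \<Rightarrow> real \<Rightarrow> real \<Rightarrow> bool" where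
  "inlier_light M \<mu> \<sigma> T \<beta> L \<longleftrightarrow>
     (\<integral>x. (x - \<mu>)^2 * indicator {x. \<bar>x - \<mu>\<bar> \<le> \<beta> * T} x \<partial>M) < (1 - L) * \<sigma>^2"

definition outlier_light :: "real measure \<Rightarrow> real \<Rightarrow> real \<Rightarrow> real \<Rightarrow> real \<Rightarrow> real \<Rightarrow> bool" where
  "outlier_light M \<mu> \<sigma> T \<beta> L \<longleftrightarrow>
     (\<integral>x. (x - \<mu>)^2 * indicator {x. \<bar>x - \<mu>\<bar> \<ge> \<beta> * T} x \<partial>M) < L * \<sigma>^2"

definition test_stat :: "nat \<Rightarrow> real \<Rightarrow> real \<Rightarrow> (nat \<Rightarrow> real) \<Rightarrow> real" where
  "test_stat n \<mu>0 thr xs =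
     (1 / real n) * (\<Sum>i<n. (xs i - \<mu>0)^2 * indicator {x. \<bar>x - \<mu>0\<bar> \<le> thr} (xs i))"

end

theory Submission imports Defs begin

lemma exp_quad_bound:
  fixes x :: real assumes "\<bar>x\<bar> \<le> 1" shows "exp x \<le> 1 + x + x^2"
proof (cases "x \<ge> 0")
  case True thus ?thesis using exp_bound assms by auto
next
  case False
  define u where "u = - x"
  have u: "u \<ge> 0" using False u_def by auto
  have e: "1 + u + u^2/2 \<le> exp u" using exp_lower_Taylor_quadratic u by blast
  have pos: "0 < 1 + u + u^2/2" using u by (simp add: add_pos_nonneg)
  have "(1 - u + u^2) * (1 + u + u^2/2) = 1 + u^2/2 + u^3/2 + u^4/2"
    by (simp add: power2_eq_square power3_eq_cube power4_eq_xxxx algebra_simps divide_simps)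
  also have "\<dots> \<ge> 1" using u by simp
  finally have "1 \<le> (1 - u + u^2) * (1 + u + u^2/2)" .
  hence "1 \<le> (1 - u + u^2) * exp u"
  proof -
    have "1 - u + u^2 = (u - 1/2)^2 + 3/4" by (simp add: power2_eq_square algebra_simps)
    hence "0 \<le> 1 - u + u^2" by (metis add_nonneg_nonneg zero_le_power2 zero_le_divide_iff zero_le_numeral)
    hence "(1 - u + u^2) * (1 + u + u^2/2) \<le> (1 - u + u^2) * exp u" by (rule mult_left_mono[OF e])
    thus ?thesis using \<open>1 \<le> (1 - u + u^2) * (1 + u + u^2/2)\<close> by linarith
  qed
  hence "exp (-u) \<le> 1 - u + u^2"
    by (simp add: exp_minus field_simps)
  thus ?thesis by (simp add: u_def)
qed

lemma chernoff_prod: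
  fixes g :: "real \<Rightarrow> real"
  assumes M: "prob_space M" and g[measurable]: "g \<in> borel_measurable M"
  shows "emeasure (PiM {..<n} (\<lambda>_. M)) {xs \<in> space (PiM {..<n} (\<lambda>_. M)). c \<le> (\<Sum>i<n. g (xs i))}
     \<le> ennreal (exp (-c)) * (\<integral>\<^sup>+x. ennreal (exp (g x)) \<partial>M)^n"
proof -
  interpret product_prob_space "\<lambda>_. M" using M
    by (simp add: product_prob_space_def product_prob_space_axioms_def product_sigma_finite_def prob_space_imp_sigma_finite)
  let ?P = "PiM {..<n} (\<lambda>_. M)"
  have "emeasure ?P {xs \<in> space ?P. c \<le> (\<Sum>i<n. g (xs i))}
     \<le> ennreal (exp (-1 * c)) * (\<integral>\<^sup>+xs. ennreal (exp (1 * (\<Sum>i<n. g (xs i)))) * indicator (space ?P) xs \<partial>?P)"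
    by (intro Chernoff_ineq_nn_integral_ge) auto
  also have "(\<integral>\<^sup>+xs. ennreal (exp (1 * (\<Sum>i<n. g (xs i)))) * indicator (space ?P) xs \<partial>?P)
     = (\<integral>\<^sup>+xs. (\<Prod>i\<in>{..<n}. ennreal (exp (g (xs i)))) \<partial>?P)"
    by (intro nn_integral_cong) (simp add: exp_sum prod_ennreal)
  also have "\<dots> = (\<Prod>i\<in>{..<n}. \<integral>\<^sup>+x. ennreal (exp (g x)) \<partial>M)"
    by (rule product_nn_integral_prod[where f="\<lambda>_ x. ennreal (exp (g x))"]) auto
  also have "\<dots> = (\<integral>\<^sup>+x. ennreal (exp (g x)) \<partial>M)^n" by simp
  finally show ?thesis by simp
qed

lemma mgf_bound:
  fixes Y :: "real \<Rightarrow> real"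
  assumes M: "prob_space M" and Y[measurable]: "Y \<in> borel_measurable M"
    and bd: "\<And>x. x \<in> space M \<Longrightarrow> 0 \<le> Y x \<and> Y x \<le> b" and sb: "\<bar>s\<bar> * b \<le> 1"
  shows "(\<integral>\<^sup>+x. ennreal (exp (s * Y x)) \<partial>M)
     \<le> ennreal (exp (s * prob_space.expectation M Y + s^2 * b * prob_space.expectation M Y))"
proof -
  interpret prob_space M by (fact M)
  have intY: "integrable M Y"
    by (rule integrable_const_bound[where B=b]) (use bd in \<open>auto intro!: AE_I2\<close>)
  have pt: "exp (s * Y x) \<le> 1 + (s + s^2 * b) * Y x" if x: "x \<in> space M" for x
  proof -
    have y: "0 \<le> Y x" "Y x \<le> b" using bd x by auto
    have "\<bar>s * Y x\<bar> \<le> \<bar>s\<bar> * b" using y by (simp add: abs_mult mult_left_mono)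
    hence "exp (s * Y x) \<le> 1 + s * Y x + (s * Y x)^2" using sb exp_quad_bound by auto
    also have "(s * Y x)^2 = s^2 * Y x * Y x" by (simp add: power2_eq_square)
    also have "\<dots> \<le> s^2 * b * Y x" using y by (simp add: mult_right_mono mult_left_mono)
    finally show ?thesis by (simp add: algebra_simps)
  qed
  have nn: "0 \<le> 1 + (s + s^2 * b) * Y x" if x: "x \<in> space M" for x
    using pt[OF x] exp_gt_zero[of "s * Y x"] by linarith
  have "(\<integral>\<^sup>+x. ennreal (exp (s * Y x)) \<partial>M) \<le> (\<integral>\<^sup>+x. ennreal (1 + (s + s^2 * b) * Y x) \<partial>M)"
    by (intro nn_integral_mono ennreal_leI) (use pt in auto)
  also have "\<dots> = ennreal (\<integral>x. 1 + (s + s^2 * b) * Y x \<partial>M)"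
    by (intro nn_integral_eq_integral) (use intY nn in \<open>auto intro!: AE_I2\<close>)
  also have "(\<integral>x. 1 + (s + s^2 * b) * Y x \<partial>M) = 1 + (s + s^2 * b) * expectation Y"
    using intY by (simp add: prob_space)
  also have "\<dots> \<le> exp (s * expectation Y + s^2 * b * expectation Y)"
    using exp_ge_add_one_self[of "s * expectation Y + s^2 * b * expectation Y"] by (simp add: algebra_simps)
  finally show ?thesis by (simp add: ennreal_leI order_trans)
qed

lemma two_mul_le: fixes D s \<theta> :: real assumes "\<theta> > 0" shows "2 * D * s \<le> \<theta> * D^2 + s^2 / \<theta>"
proof -
  have "0 \<le> (\<theta> * D - s)^2" by simp
  hence "\<theta> * (2 * D * s) \<le> \<theta> * (\<theta> * D^2 + s^2 / \<theta>)"
    using assms by (simp add: power2_eq_square algebra_simps)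
  thus ?thesis using assms by (simp add: mult_le_cancel_left_pos)
qed

lemma finish_bound:
  assumes "prob_space P" "E \<in> sets P" "F \<in> sets P" "space P \<subseteq> E \<union> F" "measure P F \<le> d"
  shows "measure P E \<ge> 1 - d"
proof -
  interpret prob_space P by fact
  have "1 = measure P (space P)" by (simp add: prob_space)
  also have "\<dots> \<le> measure P (E \<union> F)" using assms by (intro finite_measure_mono) auto
  also have "\<dots> \<le> measure P E + measure P F" using assms by (intro measure_Un_le) auto
  finally show ?thesis using assms by linarith
qed

lemma exponent_bound:
  fixes \<beta> L \<sigma> \<delta> b l G :: real and n :: nat
  assumes "0 < \<beta>" "L > 16 * \<beta>" "0 < \<delta>" "\<delta> < 1" "0 < \<sigma>" "real n > 0"
    and bdef: "b = 2 * \<beta>^2 * \<sigma>^2 * real n / ln (2 / \<delta>)" and ldef: "l = L / (16 * b)"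
    and G: "G \<ge> L * \<sigma>^2 / 4"
  shows "real n * l * G \<ge> ln (1 / \<delta>)"
proof -
  have lnd: "ln (1 / \<delta>) > 0" using assms by simp
  have ln2d: "ln (2 / \<delta>) = ln 2 + ln (1 / \<delta>)" using assms by (simp add: ln_div)
  have ln2pos: "ln (2 / \<delta>) > 0" using ln2d lnd ln_gt_zero[of "2::real"] by linarith
  have Lpos: "L > 0" using assms by linarith
  have nl: "real n * l = L * ln (2 / \<delta>) / (32 * \<beta>^2 * \<sigma>^2)"
    unfolding ldef bdef using assms ln2pos by (simp add: field_simps)
  have nlpos: "real n * l \<ge> 0" unfolding nl using Lpos ln2pos by simp
  have "real n * l * G \<ge> real n * l * (L * \<sigma>^2 / 4)" using G nlpos by (intro mult_left_mono)
  also have "real n * l * (L * \<sigma>^2 / 4) = L^2 * ln (2 / \<delta>) / (128 * \<beta>^2)"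
    unfolding nl using assms by (simp add: field_simps power2_eq_square)
  also have "L^2 * ln (2 / \<delta>) / (128 * \<beta>^2) \<ge> (256 * \<beta>^2) * ln (2 / \<delta>) / (128 * \<beta>^2)"
  proof -
    have "(16 * \<beta>)^2 \<le> L^2" using assms by (intro power_mono) auto
    thus ?thesis using ln2pos assms by (intro divide_right_mono mult_right_mono) (auto simp: power_mult_distrib)
  qed
  also have "(256 * \<beta>^2) * ln (2 / \<delta>) / (128 * \<beta>^2) = 2 * ln (2 / \<delta>)" using assms by simp
  finally show ?thesis using ln2d ln2pos lnd ln_gt_zero[of "2::real"] by linarith
qed

lemma tail_bound:
  fixes Y :: "real \<Rightarrow> real"
  assumes M: "prob_space M" and Y[measurable]: "Y \<in> borel_measurable M"
    and bd: "\<And>x. x \<in> space M \<Longrightarrow> 0 \<le> Y x \<and> Y x \<le> b" and sb: "\<bar>t\<bar> * b \<le> 1"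
    and key: "real n * (t * prob_space.expectation M Y + t^2 * b * prob_space.expectation M Y) - c \<le> ln \<delta>"
    and d: "\<delta> > 0"
  shows "measure (PiM {..<n} (\<lambda>_. M)) {xs \<in> space (PiM {..<n} (\<lambda>_. M)). c \<le> (\<Sum>i<n. t * Y (xs i))} \<le> \<delta>"
proof -
  let ?P = "PiM {..<n} (\<lambda>_. M)"
  let ?m = "prob_space.expectation M Y"
  let ?u = "t * ?m + t^2 * b * ?m"
  interpret P: prob_space ?P by (intro prob_space_PiM M)
  have g: "(\<lambda>x. t * Y x) \<in> borel_measurable M" by measurable
  have "emeasure ?P {xs \<in> space ?P. c \<le> (\<Sum>i<n. t * Y (xs i))}
      \<le> ennreal (exp (-c)) * (\<integral>\<^sup>+x. ennreal (exp (t * Y x)) \<partial>M)^n"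
    using chernoff_prod[OF M g, where c=c and n=n] by simp
  also have "\<dots> \<le> ennreal (exp (-c)) * (ennreal (exp ?u))^n"
    by (intro mult_left_mono power_mono mgf_bound[OF M Y bd sb]) auto
  also have "\<dots> = ennreal (exp (real n * ?u - c))"
    by (simp add: ennreal_power ennreal_mult' exp_of_nat_mult[symmetric] exp_diff exp_minus
        field_simps flip: ennreal_mult)
  also have "\<dots> \<le> ennreal \<delta>"
  proof (intro ennreal_leI)
    have "exp (real n * ?u - c) \<le> exp (ln \<delta>)" using key by simp
    thus "exp (real n * ?u - c) \<le> \<delta>" using d by simp
  qed
  finally show ?thesis using d by (simp add: P.emeasure_eq_measure)
qed

lemma quad_lower: fixes D s \<theta> :: real assumes "\<theta> > 0"
  shows "(1 - \<theta>) * D^2 - s^2 / \<theta> \<le> D^2 + 2 * D * s + s^2"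
proof -
  have "2 * D * (-s) \<le> \<theta> * D^2 + (-s)^2 / \<theta>" by (rule two_mul_le[OF assms])
  hence A: "- (2 * D * s) \<le> \<theta> * D^2 + s^2 / \<theta>" by simp
  have B: "(1 - \<theta>) * D^2 = D^2 - \<theta> * D^2" by (simp add: left_diff_distrib)
  have C: "s^2 \<ge> 0" by simp
  show ?thesis using A B C by linarith
qed

lemma quad_upper: fixes D s \<theta> :: real assumes "\<theta> > 0"
  shows "D^2 + 2 * D * s + s^2 \<le> (1 + \<theta>) * D^2 + (1 + 1/\<theta>) * s^2"
proof -
  have A: "2 * D * s \<le> \<theta> * D^2 + s^2 / \<theta>" by (rule two_mul_le[OF assms])
  have B: "(1 + \<theta>) * D^2 = D^2 + \<theta> * D^2" by (simp add: distrib_right)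
  have C: "(1 + 1/\<theta>) * s^2 = s^2 + s^2 / \<theta>" by (simp add: distrib_right)
  show ?thesis using A B C by linarith
qed

lemma quad_upper2: fixes D s :: real
  shows "D^2 + 2 * D * s + s^2 \<le> 2 * D^2 + 2 * s^2"
proof -
  have "2 * D * s \<le> 1 * D^2 + s^2 / 1" by (rule two_mul_le) simp
  thus ?thesis by simp
qed

lemma main_bound:
  fixes \<beta> L C1 C2 \<delta> \<mu> \<sigma> \<mu>0 :: real and n :: nat and M :: "real measure"
  assumes "0 < \<beta>" "\<beta> < 1/16" "L > 16 * \<beta>" "C1 > 1" "C2 > 1"
    and C2a: "4 * C1^2 \<le> \<beta>^2 * C2" and C2b: "C1^2 * (4*L+16) \<le> L^2 * C2" and C2c: "C1^2 \<le> C2"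
    and "0 < \<delta>" "\<delta> < 1" and nC: "real n > C2 * ln (1 / \<delta>)"
    and M: "prob_space M" and sM: "sets M = sets borel"
    and "0 < \<sigma>" and iD: "integrable M (\<lambda>x. (x - \<mu>)^2)" and ED: "(\<integral>x. (x - \<mu>)^2 \<partial>M) \<le> \<sigma>^2"
    and mu0: "\<bar>\<mu>0 - \<mu>\<bar> \<le> C1 * \<sigma> * sqrt (ln (1 / \<delta>) / real n)"
  shows "measure (PiM {..<n} (\<lambda>_. M))
       {xs \<in> space (PiM {..<n} (\<lambda>_. M)).
          (test_stat n \<mu>0 (2 * \<beta> * T_param \<sigma> n \<delta>) xs \<le> (1 - 2 * L) * \<sigma>^2
             \<longrightarrow> inlier_light M \<mu> \<sigma> (T_param \<sigma> n \<delta>) \<beta> L) \<and>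
          (\<not> test_stat n \<mu>0 (2 * \<beta> * T_param \<sigma> n \<delta>) xs \<le> (1 - 2 * L) * \<sigma>^2
             \<longrightarrow> outlier_light M \<mu> \<sigma> (T_param \<sigma> n \<delta>) (4 * \<beta>) (4 * L))}
     \<ge> 1 - \<delta>"
proof -
  interpret prob_space M by (fact M)
  define T where "T = T_param \<sigma> n \<delta>"
  define thr where "thr = 2 * \<beta> * T"
  define a where "a = (1 - 2 * L) * \<sigma>^2"
  define Y where "Y = (\<lambda>x::real. (x - \<mu>0)^2 * indicator {x. \<bar>x - \<mu>0\<bar> \<le> thr} x)"
  define b where "b = thr^2"
  define s where "s = \<mu> - \<mu>0"
  define m where "m = expectation Y"
  define inl where "inl = inlier_light M \<mu> \<sigma> T \<beta> L"
  define outl where "outl = outlier_light M \<mu> \<sigma> T (4 * \<beta>) (4 * L)"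
  define P where "P = PiM {..<n} (\<lambda>_. M)"
  define E where "E = {xs \<in> space P. ((1 / real n) * (\<Sum>i<n. Y (xs i)) \<le> a \<longrightarrow> inl) \<and>
                                   (\<not> (1 / real n) * (\<Sum>i<n. Y (xs i)) \<le> a \<longrightarrow> outl)}"
  have lnd: "ln (1 / \<delta>) > 0" using \<open>0 < \<delta>\<close> \<open>\<delta> < 1\<close> by simp
  have ln2d: "ln (2 / \<delta>) = ln 2 + ln (1 / \<delta>)"
    using \<open>0 < \<delta>\<close> by (simp add: ln_div)
  have ln2pos: "ln (2 / \<delta>) > 0" using ln2d lnd ln_gt_zero[of "2::real"] by linarith
  have npos: "real n > 0"
  proof -
    have "C2 * ln (1 / \<delta>) > 0" using lnd \<open>C2 > 1\<close> by simp
    thus ?thesis using nC by linarith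
  qed
  have T2: "T^2 = \<sigma>^2 * real n / (2 * ln (2 / \<delta>))"
    unfolding T_def T_param_def using npos ln2pos by (simp add: power_mult_distrib)
  have Tpos: "T > 0" unfolding T_def T_param_def using npos ln2pos \<open>0 < \<sigma>\<close> by simp
  have bdef: "b = 2 * \<beta>^2 * \<sigma>^2 * real n / ln (2 / \<delta>)"
    unfolding b_def thr_def using T2 by (simp add: power_mult_distrib)
  have bpos: "b > 0" unfolding b_def thr_def using Tpos \<open>0 < \<beta>\<close> by simp
  have lq: "ln (1 / \<delta>) \<le> real n / C2" using nC \<open>C2 > 1\<close> by (simp add: field_simps)
  have s2a: "s^2 \<le> C1^2 * \<sigma>^2 * (ln (1 / \<delta>) / real n)"
  proof -
    have "\<bar>s\<bar> \<le> C1 * \<sigma> * sqrt (ln (1 / \<delta>) / real n)" using mu0 by (simp add: s_def abs_minus_commute)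
    hence "\<bar>s\<bar>^2 \<le> (C1 * \<sigma> * sqrt (ln (1 / \<delta>) / real n))^2"
      by (rule power_mono) simp
    thus ?thesis using lnd npos by (simp add: power_mult_distrib)
  qed
  have s2b: "s^2 \<le> C1^2 * \<sigma>^2 / C2"
  proof -
    have "ln (1 / \<delta>) / real n \<le> 1 / C2" using lq npos \<open>C2 > 1\<close> by (simp add: field_simps)
    hence "C1^2 * \<sigma>^2 * (ln (1 / \<delta>) / real n) \<le> C1^2 * \<sigma>^2 * (1 / C2)"
      by (intro mult_left_mono) auto
    thus ?thesis using s2a by simp
  qed
  have s2c: "s^2 \<le> \<sigma>^2"
  proof -
    have "C1^2 * \<sigma>^2 / C2 \<le> \<sigma>^2" using C2c \<open>C2 > 1\<close> by (simp add: field_simps mult_right_mono)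
    thus ?thesis using s2b by linarith
  qed
  have s2d: "(4*L+16) * s^2 \<le> L^2 * \<sigma>^2"
  proof -
    have "(4*L+16) * s^2 \<le> (4*L+16) * (C1^2 * \<sigma>^2 / C2)"
      using s2b \<open>L > 16 * \<beta>\<close> \<open>0 < \<beta>\<close> by (intro mult_left_mono) auto
    also have "\<dots> = (C1^2 * (4*L+16)) * \<sigma>^2 / C2" by simp
    also have "\<dots> \<le> (L^2 * C2) * \<sigma>^2 / C2"
      using C2b \<open>C2 > 1\<close> by (intro divide_right_mono mult_right_mono) auto
    also have "\<dots> = L^2 * \<sigma>^2" using \<open>C2 > 1\<close> by simp
    finally show ?thesis .
  qed
  have sT: "\<bar>s\<bar> \<le> \<beta> * T"
  proof -
    have n1: "real n \<ge> 1" using npos by simp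
    have "real n / C2 \<le> real n" using npos \<open>C2 > 1\<close> by (simp add: field_simps)
    hence A: "ln (2 / \<delta>) \<le> 2 * real n" using ln2d lq ln_2_less_1 n1 by linarith
    have "2 * C1^2 * ln (1 / \<delta>) * ln (2 / \<delta>) \<le> 2 * C1^2 * (real n / C2) * (2 * real n)"
      using lq A lnd ln2pos \<open>C2 > 1\<close> by (intro mult_mono) auto
    also have "\<dots> = (4 * C1^2) * real n^2 / C2" by (simp add: power2_eq_square)
    also have "\<dots> \<le> (\<beta>^2 * C2) * real n^2 / C2"
      using C2a \<open>C2 > 1\<close> by (intro divide_right_mono mult_right_mono) auto
    also have "\<dots> = \<beta>^2 * real n^2" using \<open>C2 > 1\<close> by simp
    finally have B: "2 * C1^2 * ln (1 / \<delta>) * ln (2 / \<delta>) \<le> \<beta>^2 * real n^2" .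
    have "C1^2 * \<sigma>^2 * (ln (1 / \<delta>) / real n) \<le> \<beta>^2 * (\<sigma>^2 * real n / (2 * ln (2 / \<delta>)))"
    proof -
      have "C1^2 * \<sigma>^2 * (ln (1 / \<delta>) / real n) = \<sigma>^2 * (2 * C1^2 * ln (1 / \<delta>) * ln (2 / \<delta>)) / (2 * real n * ln (2 / \<delta>))"
        using npos ln2pos by (simp add: field_simps)
      also have "\<dots> \<le> \<sigma>^2 * (\<beta>^2 * real n^2) / (2 * real n * ln (2 / \<delta>))"
        using B npos ln2pos by (intro divide_right_mono mult_left_mono) auto
      also have "\<dots> = \<beta>^2 * (\<sigma>^2 * real n / (2 * ln (2 / \<delta>)))"
        using npos ln2pos by (simp add: field_simps power2_eq_square)
      finally show ?thesis .
    qed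
    hence "s^2 \<le> (\<beta> * T)^2" using s2a T2 by (simp add: power_mult_distrib)
    hence "\<bar>s\<bar> \<le> \<bar>\<beta> * T\<bar>" using abs_le_square_iff by blast
    moreover have "\<bar>\<beta> * T\<bar> = \<beta> * T" using Tpos \<open>0 < \<beta>\<close> by simp
    ultimately show ?thesis by simp
  qed
  have spaceM: "space M = UNIV" using sets_eq_imp_space_eq[OF sM] by simp
  have YB[measurable]: "Y \<in> borel_measurable borel" unfolding Y_def by measurable
  have YM[measurable]: "Y \<in> borel_measurable M" using YB by (simp add: measurable_cong_sets[OF sM refl])
  have Ybd: "0 \<le> Y x \<and> Y x \<le> b" for x
  proof (cases "\<bar>x - \<mu>0\<bar> \<le> thr")
    case True
    have "\<bar>x - \<mu>0\<bar>^2 \<le> thr^2" using True by (intro power_mono) auto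
    thus ?thesis using True by (simp add: Y_def b_def)
  next
    case False thus ?thesis using bpos by (simp add: Y_def)
  qed
  have intY: "integrable M Y"
    by (rule integrable_const_bound[where B=b]) (use Ybd in \<open>auto intro!: AE_I2\<close>)
  have setle: "{x::real. \<bar>x - \<mu>\<bar> \<le> c} \<in> sets M" for c
  proof -
    have "{x \<in> space borel. \<bar>x - \<mu>\<bar> \<le> c} \<in> sets borel" by measurable
    thus ?thesis using sM by simp
  qed
  have setge: "{x::real. \<bar>x - \<mu>\<bar> \<ge> c} \<in> sets M" for c
  proof -
    have "{x \<in> space borel. \<bar>x - \<mu>\<bar> \<ge> c} \<in> sets borel" by measurable
    thus ?thesis using sM by simp
  qed
  define ind1 where "ind1 = (indicator {x::real. \<bar>x - \<mu>\<bar> \<le> \<beta> * T} :: real \<Rightarrow> real)"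
  define ind4 where "ind4 = (indicator {x::real. \<bar>x - \<mu>\<bar> \<ge> 4 * \<beta> * T} :: real \<Rightarrow> real)"
  have i1: "integrable M (\<lambda>x. (x - \<mu>)^2 * ind1 x)"
    unfolding ind1_def by (rule integrable_real_mult_indicator[OF setle iD])
  have i4: "integrable M (\<lambda>x. (x - \<mu>)^2 * ind4 x)"
    unfolding ind4_def by (rule integrable_real_mult_indicator[OF setge iD])
  define I1 where "I1 = (\<integral>x. (x - \<mu>)^2 * ind1 x \<partial>M)"
  define J4 where "J4 = (\<integral>x. (x - \<mu>)^2 * ind4 x \<partial>M)"
  define EDv where "EDv = (\<integral>x. (x - \<mu>)^2 \<partial>M)"
  have I1nn: "I1 \<ge> 0" unfolding I1_def ind1_def by (intro integral_nonneg_AE) (auto split: split_indicator)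
  have J4nn: "J4 \<ge> 0" unfolding J4_def ind4_def by (intro integral_nonneg_AE) (auto split: split_indicator)
  have EDle: "EDv \<le> \<sigma>^2" using ED by (simp add: EDv_def)
  have sumle: "I1 + J4 \<le> EDv"
  proof -
    have "I1 + J4 = (\<integral>x. (x - \<mu>)^2 * ind1 x + (x - \<mu>)^2 * ind4 x \<partial>M)"
      unfolding I1_def J4_def using i1 i4 by simp
    also have "\<dots> \<le> EDv" unfolding EDv_def
    proof (intro integral_mono)
      fix x :: real
      show "(x - \<mu>)^2 * ind1 x + (x - \<mu>)^2 * ind4 x \<le> (x - \<mu>)^2"
        unfolding ind1_def ind4_def using Tpos \<open>0 < \<beta>\<close>
        by (auto split: split_indicator)
    qed (use i1 i4 iD in auto)
    finally show ?thesis .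
  qed
  have inl_iff: "inl \<longleftrightarrow> I1 < (1 - L) * \<sigma>^2"
    unfolding inl_def inlier_light_def I1_def ind1_def by simp
  have outl_iff: "outl \<longleftrightarrow> J4 < 4 * L * \<sigma>^2"
    unfolding outl_def outlier_light_def J4_def ind4_def by (simp add: mult.assoc)
  have Lpos: "L > 0" using assms by linarith
  have noboth: "inl \<or> outl"
  proof (rule ccontr)
    assume "\<not> (inl \<or> outl)"
    hence "I1 \<ge> (1 - L) * \<sigma>^2" "J4 \<ge> 4 * L * \<sigma>^2" using inl_iff outl_iff by auto
    moreover have "L * \<sigma>^2 > 0" using Lpos \<open>0 < \<sigma>\<close> by simp
    ultimately show False using sumle EDle by (simp add: algebra_simps)
  qed
  have PP: "prob_space P" unfolding P_def by (intro prob_space_PiM M)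
  have SY[measurable]: "(\<lambda>xs. \<Sum>i<n. Y (xs i)) \<in> borel_measurable P" unfolding P_def by measurable
  have Esets: "E \<in> sets P" unfolding E_def by measurable
  have Eeq: "{xs \<in> space (PiM {..<n} (\<lambda>_. M)).
          (test_stat n \<mu>0 (2 * \<beta> * T_param \<sigma> n \<delta>) xs \<le> (1 - 2 * L) * \<sigma>^2
             \<longrightarrow> inlier_light M \<mu> \<sigma> (T_param \<sigma> n \<delta>) \<beta> L) \<and>
          (\<not> test_stat n \<mu>0 (2 * \<beta> * T_param \<sigma> n \<delta>) xs \<le> (1 - 2 * L) * \<sigma>^2
             \<longrightarrow> outlier_light M \<mu> \<sigma> (T_param \<sigma> n \<delta>) (4 * \<beta>) (4 * L))} = E"
    unfolding E_def P_def test_stat_def Y_def thr_def T_def a_def inl_def outl_def by simp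
  have Bsum: "(1 / real n) * (\<Sum>i<n. Y (xs i)) \<le> a \<longleftrightarrow> (\<Sum>i<n. Y (xs i)) \<le> real n * a" for xs
    using npos by (simp add: field_simps)
  have Snn: "(\<Sum>i<n. Y (xs i)) \<ge> 0" for xs using Ybd by (simp add: sum_nonneg)
  define l where "l = L / (16 * b)"
  have lpos: "l > 0" unfolding l_def using Lpos bpos by simp
  have lb: "l * b = L / 16" unfolding l_def using bpos by simp
  have sq_ineq: "(x - \<mu>0)^2 = (x - \<mu>)^2 + 2 * (x - \<mu>) * s + s^2" for x
    unfolding s_def by (simp add: power2_eq_square algebra_simps)
  have "E = space P \<or> (\<exists>F. F \<in> sets P \<and> space P \<subseteq> E \<union> F \<and> measure P F \<le> \<delta>)"
  proof (cases "inl \<and> outl")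
    case True thus ?thesis unfolding E_def by auto
  next
    case False
    show ?thesis
    proof (cases outl)
      case False
      hence inl: inl using noboth by auto
      have J4ge: "J4 \<ge> 4 * L * \<sigma>^2" using False outl_iff by auto
      have L4: "4 * L \<le> 1"
      proof -
        have "4 * L * \<sigma>^2 \<le> 1 * \<sigma>^2" using J4ge sumle I1nn EDle by linarith
        thus ?thesis using \<open>0 < \<sigma>\<close> by (simp only: mult_le_cancel_right) simp
      qed
      define \<theta> where "\<theta> = L / 4"
      have \<theta>pos: "\<theta> > 0" unfolding \<theta>_def using Lpos by simp
      have ptU: "Y x \<le> (1 + \<theta>) * ((x - \<mu>)^2 - (x - \<mu>)^2 * ind4 x) + (1 + 1/\<theta>) * s^2" for x
      proof (cases "\<bar>x - \<mu>0\<bar> \<le> thr")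
        case True
        have "\<bar>x - \<mu>\<bar> \<le> \<bar>x - \<mu>0\<bar> + \<bar>s\<bar>" unfolding s_def by linarith
        also have "\<dots> \<le> 2 * \<beta> * T + \<beta> * T" using True sT unfolding thr_def by linarith
        also have "\<dots> < 4 * \<beta> * T" using Tpos \<open>0 < \<beta>\<close> by simp
        finally have "ind4 x = 0" unfolding ind4_def by simp
        moreover have "Y x = (x - \<mu>)^2 + 2 * (x - \<mu>) * s + s^2" using True unfolding Y_def by (simp only: sq_ineq) simp
        ultimately show ?thesis using quad_upper[OF \<theta>pos, of "x - \<mu>" s] by simp
      next
        case False
        have "(x - \<mu>)^2 - (x - \<mu>)^2 * ind4 x \<ge> 0" unfolding ind4_def by (simp split: split_indicator)
        hence "0 \<le> (1 + \<theta>) * ((x - \<mu>)^2 - (x - \<mu>)^2 * ind4 x) + (1 + 1/\<theta>) * s^2"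
          using \<theta>pos by (intro add_nonneg_nonneg mult_nonneg_nonneg) auto
        thus ?thesis using False unfolding Y_def by simp
      qed
      have mU: "m \<le> (1 + \<theta>) * (EDv - J4) + (1 + 1/\<theta>) * s^2"
      proof -
        have "m \<le> (\<integral>x. (1 + \<theta>) * ((x - \<mu>)^2 - (x - \<mu>)^2 * ind4 x) + (1 + 1/\<theta>) * s^2 \<partial>M)"
          unfolding m_def using ptU intY iD i4 by (intro integral_mono) auto
        also have "\<dots> = (1 + \<theta>) * (EDv - J4) + (1 + 1/\<theta>) * s^2"
          unfolding EDv_def J4_def using iD i4 by (simp add: prob_space)
        finally show ?thesis .
      qed
      have "EDv - J4 \<ge> 0" "EDv - J4 \<le> \<sigma>^2" using sumle I1nn J4nn EDle by linarith+
      hence t1: "\<theta> * (EDv - J4) \<le> \<theta> * \<sigma>^2" using \<theta>pos by (intro mult_left_mono) auto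
      have t2: "(1 + 1/\<theta>) * s^2 \<le> L * \<sigma>^2 / 4"
      proof -
        have "(1 + 1/\<theta>) * s^2 = (4*L+16) * s^2 / (4 * L)" unfolding \<theta>_def using Lpos by (simp add: field_simps)
        also have "\<dots> \<le> L^2 * \<sigma>^2 / (4 * L)" using s2d Lpos by (intro divide_right_mono) auto
        also have "\<dots> = L * \<sigma>^2 / 4" using Lpos by (simp add: power2_eq_square field_simps)
        finally show ?thesis .
      qed
      have e1: "(1 + \<theta>) * (EDv - J4) = (EDv - J4) + \<theta> * (EDv - J4)" by (simp add: distrib_right)
      have e2: "\<theta> * \<sigma>^2 = L * \<sigma>^2 / 4" unfolding \<theta>_def by simp
      have e3: "(1 - 4 * L) * \<sigma>^2 = \<sigma>^2 - 4 * L * \<sigma>^2" by (simp add: algebra_simps)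
      have mU2: "m \<le> \<sigma>^2 - 4 * L * \<sigma>^2 + L * \<sigma>^2 / 2"
        using mU t1 t2 J4ge EDle e1 e2 by linarith
      have Lsp: "L * \<sigma>^2 > 0" using Lpos \<open>0 < \<sigma>\<close> by simp
      have m1: "m \<le> \<sigma>^2" using mU2 Lsp by linarith
      have Lm: "L / 16 * m \<le> L / 16 * \<sigma>^2" using m1 Lpos by (intro mult_left_mono) auto
      have e4: "L / 16 * \<sigma>^2 = L * \<sigma>^2 / 16" by simp
      have e5: "a = \<sigma>^2 - 2 * (L * \<sigma>^2)" unfolding a_def by (simp add: algebra_simps)
      have G: "a - m - L / 16 * m \<ge> L * \<sigma>^2 / 4"
        using mU2 Lm e4 e5 Lsp by linarith
      have nlG: "real n * l * (a - m - L / 16 * m) \<ge> ln (1 / \<delta>)"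
        by (rule exponent_bound[OF \<open>0 < \<beta>\<close> \<open>L > 16 * \<beta>\<close> \<open>0 < \<delta>\<close> \<open>\<delta> < 1\<close> \<open>0 < \<sigma>\<close> npos bdef l_def G])
      define F where "F = {xs \<in> space P. l * real n * a \<le> (\<Sum>i<n. l * Y (xs i))}"
      have "measure P F \<le> \<delta>" unfolding F_def P_def
      proof (rule tail_bound[OF M YM])
        show "\<bar>l\<bar> * b \<le> 1" using lb lpos L4 by simp
        have "real n * (l * m + l^2 * b * m) - l * real n * a = - (real n * l * (a - m - (l * b) * m))"
          by (simp add: power2_eq_square algebra_simps)
        also have "\<dots> \<le> - ln (1 / \<delta>)" unfolding lb using nlG by simp
        also have "\<dots> = ln \<delta>" using \<open>0 < \<delta>\<close> by (simp add: ln_div)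
        finally show "real n * (l * expectation Y + l^2 * b * expectation Y) - l * real n * a \<le> ln \<delta>"
          unfolding m_def .
      qed (use Ybd \<open>0 < \<delta>\<close> in auto)
      moreover have "F \<in> sets P" unfolding F_def P_def by measurable
      moreover have "space P \<subseteq> E \<union> F"
      proof
        fix xs assume xs: "xs \<in> space P"
        show "xs \<in> E \<union> F"
        proof (cases "(1 / real n) * (\<Sum>i<n. Y (xs i)) \<le> a")
          case True thus ?thesis using xs inl unfolding E_def by auto
        next
          case False
          hence "real n * a \<le> (\<Sum>i<n. Y (xs i))" using Bsum by auto
          hence "l * (real n * a) \<le> l * (\<Sum>i<n. Y (xs i))" using lpos by (intro mult_left_mono) auto
          thus ?thesis using xs unfolding F_def by (simp add: sum_distrib_left mult.assoc)
        qed
      qed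
      ultimately show ?thesis by blast
    next
      case True
      hence ninl: "\<not> inl" using \<open>\<not> (inl \<and> outl)\<close> by auto
      have I1ge: "I1 \<ge> (1 - L) * \<sigma>^2" using ninl inl_iff by auto
      show ?thesis
      proof (cases "L \<le> 1")
        case False
        have "a < 0" unfolding a_def using False \<open>0 < \<sigma>\<close> by (simp add: mult_neg_pos)
        hence "real n * a < 0" using npos by (simp add: mult_pos_neg)
        hence nB: "\<not> (1 / real n) * (\<Sum>i<n. Y (xs i)) \<le> a" for xs using Bsum[of xs] Snn[of xs] by linarith
        have "E = space P" unfolding E_def using nB True by auto
        thus ?thesis by blast
      next
        case True
        define \<theta> where "\<theta> = L / 4"
        have \<theta>pos: "\<theta> > 0" unfolding \<theta>_def using Lpos by simp
        have \<theta>1: "\<theta> \<le> 1" unfolding \<theta>_def using True by simp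
        have ptL: "(1 - \<theta>) * ((x - \<mu>)^2 * ind1 x) - s^2 / \<theta> \<le> Y x" for x
        proof (cases "\<bar>x - \<mu>\<bar> \<le> \<beta> * T")
          case True
          have "\<bar>x - \<mu>0\<bar> \<le> \<bar>x - \<mu>\<bar> + \<bar>s\<bar>" unfolding s_def by linarith
          also have "\<dots> \<le> thr" using True sT unfolding thr_def by linarith
          finally have in0: "\<bar>x - \<mu>0\<bar> \<le> thr" .
          have i1: "ind1 x = 1" unfolding ind1_def using True by simp
          have "Y x = (x - \<mu>)^2 + 2 * (x - \<mu>) * s + s^2" using in0 unfolding Y_def by (simp only: sq_ineq) simp
          thus ?thesis using i1 quad_lower[OF \<theta>pos, of "x - \<mu>" s] by simp
        next
          case False
          have "ind1 x = 0" unfolding ind1_def using False by simp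
          moreover have "s^2 / \<theta> \<ge> 0" using \<theta>pos by simp
          moreover have "Y x \<ge> 0" using Ybd by blast
          ultimately show ?thesis by simp
        qed
        have mL: "m \<ge> (1 - \<theta>) * I1 - s^2 / \<theta>"
        proof -
          have "(\<integral>x. (1 - \<theta>) * ((x - \<mu>)^2 * ind1 x) - s^2 / \<theta> \<partial>M) \<le> m"
            unfolding m_def using ptL intY i1 by (intro integral_mono) auto
          moreover have "(\<integral>x. (1 - \<theta>) * ((x - \<mu>)^2 * ind1 x) - s^2 / \<theta> \<partial>M) = (1 - \<theta>) * I1 - s^2 / \<theta>"
            unfolding I1_def using i1 by (simp add: prob_space)
          ultimately show ?thesis by simp
        qed
        have ptM: "Y x \<le> 2 * (x - \<mu>)^2 + 2 * s^2" for x
        proof -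
          have "Y x \<le> (x - \<mu>0)^2" unfolding Y_def by (simp split: split_indicator)
          moreover have "(x - \<mu>0)^2 = (x - \<mu>)^2 + 2 * (x - \<mu>) * s + s^2" by (rule sq_ineq)
          ultimately show ?thesis using quad_upper2[of "x - \<mu>" s] by linarith
        qed
        have m4: "m \<le> 4 * \<sigma>^2"
        proof -
          have "m \<le> (\<integral>x. 2 * (x - \<mu>)^2 + 2 * s^2 \<partial>M)"
            unfolding m_def using ptM intY iD by (intro integral_mono) auto
          also have "\<dots> = 2 * EDv + 2 * s^2" unfolding EDv_def using iD by (simp add: prob_space)
          finally show ?thesis using EDle s2c by linarith
        qed
        have c1: "(1 - \<theta>) * I1 \<ge> (1 - \<theta>) * ((1 - L) * \<sigma>^2)" using I1ge \<theta>1 by (intro mult_left_mono) auto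
        have c2: "(1 - \<theta>) * ((1 - L) * \<sigma>^2) = (1 - L) * \<sigma>^2 - \<theta> * \<sigma>^2 + \<theta> * (L * \<sigma>^2)"
          by (simp add: algebra_simps)
        have c3: "\<theta> * (L * \<sigma>^2) \<ge> 0" using \<theta>pos Lpos by simp
        have c4: "s^2 / \<theta> \<le> L * \<sigma>^2 / 4"
        proof -
          have "4 * L * s^2 \<ge> 0" using Lpos by simp
          moreover have "(4*L+16) * s^2 = 4 * L * s^2 + 16 * s^2" by (simp add: distrib_right)
          ultimately have "16 * s^2 \<le> L^2 * \<sigma>^2" using s2d by linarith
          hence "(16 * s^2) / (4 * L) \<le> (L^2 * \<sigma>^2) / (4 * L)" using Lpos by (intro divide_right_mono) auto
          moreover have "s^2 / \<theta> = (16 * s^2) / (4 * L)" unfolding \<theta>_def using Lpos by (simp add: field_simps)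
          moreover have "(L^2 * \<sigma>^2) / (4 * L) = L * \<sigma>^2 / 4" using Lpos by (simp add: field_simps power2_eq_square)
          ultimately show ?thesis by simp
        qed
        have e2: "\<theta> * \<sigma>^2 = L * \<sigma>^2 / 4" unfolding \<theta>_def by simp
        have e5: "a = \<sigma>^2 - 2 * (L * \<sigma>^2)" unfolding a_def by (simp add: algebra_simps)
        have e6: "(1 - L) * \<sigma>^2 = \<sigma>^2 - L * \<sigma>^2" by (simp add: algebra_simps)
        have Lm: "L / 16 * m \<le> L / 16 * (4 * \<sigma>^2)" using m4 Lpos by (intro mult_left_mono) auto
        have e7: "L / 16 * (4 * \<sigma>^2) = L * \<sigma>^2 / 4" by simp
        have G: "m - a - L / 16 * m \<ge> L * \<sigma>^2 / 4"
          using mL c1 c2 c3 c4 e2 e5 e6 Lm e7 by linarith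
        have nlG: "real n * l * (m - a - L / 16 * m) \<ge> ln (1 / \<delta>)"
          by (rule exponent_bound[OF \<open>0 < \<beta>\<close> \<open>L > 16 * \<beta>\<close> \<open>0 < \<delta>\<close> \<open>\<delta> < 1\<close> \<open>0 < \<sigma>\<close> npos bdef l_def G])
        define F where "F = {xs \<in> space P. - (l * real n * a) \<le> (\<Sum>i<n. (- l) * Y (xs i))}"
        have "measure P F \<le> \<delta>" unfolding F_def P_def
        proof (rule tail_bound[OF M YM])
          show "\<bar>- l\<bar> * b \<le> 1" using lb lpos True by simp
          have "real n * ((- l) * m + (- l)^2 * b * m) - - (l * real n * a) = - (real n * l * (m - a - (l * b) * m))"
            by (simp add: power2_eq_square algebra_simps)
          also have "\<dots> \<le> - ln (1 / \<delta>)" unfolding lb using nlG by simp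
          also have "\<dots> = ln \<delta>" using \<open>0 < \<delta>\<close> by (simp add: ln_div)
          finally show "real n * ((- l) * expectation Y + (- l)^2 * b * expectation Y) - - (l * real n * a) \<le> ln \<delta>"
            unfolding m_def .
        qed (use Ybd \<open>0 < \<delta>\<close> in auto)
        moreover have "F \<in> sets P" unfolding F_def P_def by measurable
        moreover have "space P \<subseteq> E \<union> F"
        proof
          fix xs assume xs: "xs \<in> space P"
          show "xs \<in> E \<union> F"
          proof (cases "(1 / real n) * (\<Sum>i<n. Y (xs i)) \<le> a")
            case False thus ?thesis using xs \<open>outl\<close> unfolding E_def by auto
          next
            case True
            hence "(\<Sum>i<n. Y (xs i)) \<le> real n * a" using Bsum by auto
            hence "(- l) * (real n * a) \<le> (- l) * (\<Sum>i<n. Y (xs i))" using lpos by (intro mult_left_mono_neg) auto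
            thus ?thesis using xs unfolding F_def by (simp add: sum_distrib_left mult.assoc)
          qed
        qed
        ultimately show ?thesis by blast
      qed
    qed
  qed
  hence "measure P E \<ge> 1 - \<delta>"
  proof
    assume "E = space P"
    thus ?thesis using PP prob_space.prob_space \<open>0 < \<delta>\<close> by fastforce
  next
    assume "\<exists>F. F \<in> sets P \<and> space P \<subseteq> E \<union> F \<and> measure P F \<le> \<delta>"
    then obtain F where "F \<in> sets P" "space P \<subseteq> E \<union> F" "measure P F \<le> \<delta>" by blast
    thus ?thesis using finish_bound[OF PP Esets] by blast
  qed
  thus ?thesis using Eeq P_def by simp
qed

theorem lemma13:
  fixes \<beta> L C\<^sub>1 :: real
  assumes "0 < \<beta>" "\<beta> < 1/16" "L > 16 * \<beta>" "C\<^sub>1 > 1"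
  shows "\<exists>C\<^sub>2 > 1. \<forall>(\<delta>::real) (n::nat) (M::real measure) (\<mu>::real) (\<sigma>::real) (\<mu>0::real).
     0 < \<delta> \<and> \<delta> < 1 \<and> real n > C\<^sub>2 * ln (1 / \<delta>) \<and>
     prob_space M \<and> sets M = sets borel \<and>
     integrable M (\<lambda>x. x) \<and> (\<integral>x. x \<partial>M) = \<mu> \<and>
     0 < \<sigma> \<and> integrable M (\<lambda>x. (x - \<mu>)^2) \<and> (\<integral>x. (x - \<mu>)^2 \<partial>M) \<le> \<sigma>^2 \<and>
     \<bar>\<mu>0 - \<mu>\<bar> \<le> C\<^sub>1 * \<sigma> * sqrt (ln (1 / \<delta>) / real n)
     \<longrightarrow>
     measure (PiM {..<n} (\<lambda>_. M))
       {xs \<in> space (PiM {..<n} (\<lambda>_. M)).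
          (test_stat n \<mu>0 (2 * \<beta> * T_param \<sigma> n \<delta>) xs \<le> (1 - 2 * L) * \<sigma>^2
             \<longrightarrow> inlier_light M \<mu> \<sigma> (T_param \<sigma> n \<delta>) \<beta> L) \<and>
          (\<not> test_stat n \<mu>0 (2 * \<beta> * T_param \<sigma> n \<delta>) xs \<le> (1 - 2 * L) * \<sigma>^2
             \<longrightarrow> outlier_light M \<mu> \<sigma> (T_param \<sigma> n \<delta>) (4 * \<beta>) (4 * L))}
     \<ge> 1 - \<delta>"
proof -
  have Lpos: "L > 0" using assms by linarith
  define C2 where "C2 = 1 + 4 * C\<^sub>1^2 / \<beta>^2 + C\<^sub>1^2 * (4*L+16) / L^2 + C\<^sub>1^2"
  have t1: "4 * C\<^sub>1^2 / \<beta>^2 \<ge> 0" "C\<^sub>1^2 * (4*L+16) / L^2 \<ge> 0" "C\<^sub>1^2 \<ge> 0"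
    using Lpos by auto
  have "C\<^sub>1^2 > 0" using assms by simp
  hence C2g: "C2 > 1" unfolding C2_def using t1 by linarith
  have C2a: "4 * C\<^sub>1^2 \<le> \<beta>^2 * C2"
  proof -
    have "4 * C\<^sub>1^2 / \<beta>^2 \<le> C2" unfolding C2_def using t1 by linarith
    hence "\<beta>^2 * (4 * C\<^sub>1^2 / \<beta>^2) \<le> \<beta>^2 * C2" by (intro mult_left_mono) auto
    thus ?thesis using assms by simp
  qed
  have C2b: "C\<^sub>1^2 * (4*L+16) \<le> L^2 * C2"
  proof -
    have "C\<^sub>1^2 * (4*L+16) / L^2 \<le> C2" unfolding C2_def using t1 by linarith
    hence "L^2 * (C\<^sub>1^2 * (4*L+16) / L^2) \<le> L^2 * C2" by (intro mult_left_mono) auto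
    thus ?thesis using Lpos by simp
  qed
  have C2c: "C\<^sub>1^2 \<le> C2" unfolding C2_def using t1 by linarith
  show ?thesis
  proof (intro exI[of _ C2] conjI allI impI C2g)
    fix \<delta> :: real and n :: nat and M :: "real measure" and \<mu> \<sigma> \<mu>0 :: real
    assume H: "0 < \<delta> \<and> \<delta> < 1 \<and> real n > C2 * ln (1 / \<delta>) \<and>
     prob_space M \<and> sets M = sets borel \<and>
     integrable M (\<lambda>x. x) \<and> (\<integral>x. x \<partial>M) = \<mu> \<and>
     0 < \<sigma> \<and> integrable M (\<lambda>x. (x - \<mu>)^2) \<and> (\<integral>x. (x - \<mu>)^2 \<partial>M) \<le> \<sigma>^2 \<and>
     \<bar>\<mu>0 - \<mu>\<bar> \<le> C\<^sub>1 * \<sigma> * sqrt (ln (1 / \<delta>) / real n)"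
    show "measure (PiM {..<n} (\<lambda>_. M))
       {xs \<in> space (PiM {..<n} (\<lambda>_. M)).
          (test_stat n \<mu>0 (2 * \<beta> * T_param \<sigma> n \<delta>) xs \<le> (1 - 2 * L) * \<sigma>^2
             \<longrightarrow> inlier_light M \<mu> \<sigma> (T_param \<sigma> n \<delta>) \<beta> L) \<and>
          (\<not> test_stat n \<mu>0 (2 * \<beta> * T_param \<sigma> n \<delta>) xs \<le> (1 - 2 * L) * \<sigma>^2
             \<longrightarrow> outlier_light M \<mu> \<sigma> (T_param \<sigma> n \<delta>) (4 * \<beta>) (4 * L))}
     \<ge> 1 - \<delta>"
      using H by (intro main_bound[OF assms C2g C2a C2b C2c]) auto
  qed
qed

end
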